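(* Let $\mathbb{B}=\mathbb{C}\otimes\mathbb{H}$ be the algebra of complexified quaternions, whose elements are written $x=(x_1,x_2,x_3,x_4)$ to mean $x=x_1+x_2\hat{i}+x_3\hat{j}+x_4\hat{k}$ with $x_1,\dots,x_4\in\mathbb{C}$. The quaternion units satisfy $\hat{i}^2=\hat{j}^2=\hat{k}^2=\hat{i}\hat{j}\hat{k}=-1$, and multiplication is extended $\mathbb{C}$-bilinearly, with the complex scalars commuting with $\hat{i},\hat{j},\hat{k}$. Call $x\in\mathbb{B}$ entangled if its concurrence $C(x)=2\,|x_1x_4-x_2x_3|$ is nonzero. Let $\alpha,\beta\in\mathbb{C}$ with $\alpha\neq0$, $\beta\neq0$ and $|\alpha|^2+|\beta|^2=1$. Let $q$ be one of $$(\alpha,\beta,0,0),\quad (0,0,\alpha,\beta),\quad (\alpha,0,\beta,0),\quad (0,\alpha,0,\beta).$$ Let $p=(a_1,a_2,a_3,a_4)$ with $a_1,\dots,a_4\in\mathbb{R}$ and $a_1^2+a_2^2+a_3^2+a_4^2=1$, and suppose $p$ satisfies: (R1) $p$ is not entangled, i.e. $a_1a_4=a_2a_3$; (R2) $p$ is not a pure state, i.e. at least two of $a_1,\dots,a_4$ are nonzero; (R3) $p$ is connected to $q$ in exactly one direction, i.e. there is exactly one index $m\in\{1,2,3,4\}$ for which both the $m$-th coordinate of $p$ and the $m$-th coordinate of $q$ are nonzero. Then $\Lambda(q):=pqp$ is entangled, i.e. $C(pqp)\neq0$.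
   Context: In the paper, a one-particle state $\alpha|0\rangle+\beta|1\rangle$ with $|\alpha|^2+|\beta|^2=1$ is embedded in $\mathbb{B}$ in one of the four listed ways. The map $\Lambda(q)=pqp$, with $p$ a real unit quaternion, is proposed as an "entanglement operator". The concurrence of $x=(x_1,x_2,x_3,x_4)$ is $C(x)=2|x_1x_4-x_2x_3|$, and $x$ is called entangled iff $C(x)\neq0$. A "pure state" in $\mathbb{B}$ means an element with only one nonzero coordinate. *)

theory Defs
  imports Complex_Main
begin

text \<open>Complexified quaternions B = C (x) H: x = x1 + x2 i + x3 j + x4 k with complex xi.\<close>
datatype bq = BQ complex complex complex complex

fun coord :: "bq \<Rightarrow> nat \<Rightarrow> complex" where
  "coord (BQ x1 x2 x3 x4) n =
     (if n = 1 then x1 else if n = 2 then x2 else if n = 3 then x3 else if n = 4 then x4 else 0)"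

text \<open>C-bilinear extension of the Hamilton product (i^2 = j^2 = k^2 = ijk = -1).\<close>
fun bq_mult :: "bq \<Rightarrow> bq \<Rightarrow> bq" where
  "bq_mult (BQ a1 b1 c1 d1) (BQ a2 b2 c2 d2) =
     BQ (a1*a2 - b1*b2 - c1*c2 - d1*d2)
        (a1*b2 + b1*a2 + c1*d2 - d1*c2)
        (a1*c2 - b1*d2 + c1*a2 + d1*b2)
        (a1*d2 + b1*c2 - c1*b2 + d1*a2)"

definition concurrence :: "bq \<Rightarrow> real" where
  "concurrence x = 2 * cmod (coord x 1 * coord x 4 - coord x 2 * coord x 3)"

definition entangled :: "bq \<Rightarrow> bool" where
  "entangled x \<longleftrightarrow> concurrence x \<noteq> 0"


end

theory Submission
  imports Defs
begin

lemma nz: "(a::real) \<noteq> 0 \<Longrightarrow> c \<noteq> 0 \<Longrightarrow> (\<alpha>::complex) \<noteq> 0 \<Longrightarrow> \<beta> \<noteq> 0 \<Longrightarrow>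
   2 * (of_real a) * of_real c * ((of_real a)^2+(of_real c)^2) * \<alpha> * \<beta> \<noteq> 0"
proof -
  assume h: "a \<noteq> 0" "c \<noteq> 0" "\<alpha> \<noteq> 0" "\<beta> \<noteq> 0"
  have "a^2 + c^2 > 0" using h by (simp add: add_pos_nonneg)
  then have "complex_of_real (a^2 + c^2) \<noteq> 0" by (simp only: of_real_eq_0_iff)
  then have "(of_real a)^2+(of_real c)^2 \<noteq> (0::complex)" by simp
  then show ?thesis using h by simp
qed

definition det :: "bq \<Rightarrow> complex" where
  "det x = coord x 1 * coord x 4 - coord x 2 * coord x 3"

lemma entI: "det x \<noteq> 0 \<Longrightarrow> entangled x"
  unfolding entangled_def concurrence_def det_def by simp

lemma four: "{1..4::nat} = {1,2,3,4}" by auto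

lemma cBQ: "coord (BQ a b c d) 1 = a" "coord (BQ a b c d) 2 = b" "coord (BQ a b c d) 3 = c" "coord (BQ a b c d) 4 = d"
  by simp_all

lemma q1a: "a \<noteq> 0 \<Longrightarrow> c \<noteq> 0 \<Longrightarrow> \<alpha> \<noteq> 0 \<Longrightarrow> \<beta> \<noteq> 0 \<Longrightarrow>
  entangled (bq_mult (bq_mult (BQ (of_real a) 0 (of_real c) 0) (BQ \<alpha> \<beta> 0 0)) (BQ (of_real a) 0 (of_real c) 0))"
proof -
  assume h: "a \<noteq> 0" "c \<noteq> 0" "\<alpha> \<noteq> 0" "\<beta> \<noteq> 0"
  have "det (bq_mult (bq_mult (BQ (of_real a) 0 (of_real c) 0) (BQ \<alpha> \<beta> 0 0)) (BQ (of_real a) 0 (of_real c) 0)) = - (2 * (of_real a) * of_real c * ((of_real a)^2+(of_real c)^2) * \<alpha> * \<beta>)"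
    unfolding det_def bq_mult.simps cBQ by algebra
  then show ?thesis using nz[OF h] entI by (metis neg_equal_0_iff_equal)
qed

lemma q1b: "a \<noteq> 0 \<Longrightarrow> c \<noteq> 0 \<Longrightarrow> \<alpha> \<noteq> 0 \<Longrightarrow> \<beta> \<noteq> 0 \<Longrightarrow>
  entangled (bq_mult (bq_mult (BQ 0 (of_real a) 0 (of_real c)) (BQ \<alpha> \<beta> 0 0)) (BQ 0 (of_real a) 0 (of_real c)))"
proof -
  assume h: "a \<noteq> 0" "c \<noteq> 0" "\<alpha> \<noteq> 0" "\<beta> \<noteq> 0"
  have "det (bq_mult (bq_mult (BQ 0 (of_real a) 0 (of_real c)) (BQ \<alpha> \<beta> 0 0)) (BQ 0 (of_real a) 0 (of_real c))) =  (2 * (of_real a) * of_real c * ((of_real a)^2+(of_real c)^2) * \<alpha> * \<beta>)"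
    unfolding det_def bq_mult.simps cBQ by algebra
  then show ?thesis using nz[OF h] entI by (metis neg_equal_0_iff_equal)
qed

lemma q2a: "a \<noteq> 0 \<Longrightarrow> c \<noteq> 0 \<Longrightarrow> \<alpha> \<noteq> 0 \<Longrightarrow> \<beta> \<noteq> 0 \<Longrightarrow>
  entangled (bq_mult (bq_mult (BQ (of_real a) 0 (of_real c) 0) (BQ 0 0 \<alpha> \<beta>)) (BQ (of_real a) 0 (of_real c) 0))"
proof -
  assume h: "a \<noteq> 0" "c \<noteq> 0" "\<alpha> \<noteq> 0" "\<beta> \<noteq> 0"
  have "det (bq_mult (bq_mult (BQ (of_real a) 0 (of_real c) 0) (BQ 0 0 \<alpha> \<beta>)) (BQ (of_real a) 0 (of_real c) 0)) = - (2 * (of_real a) * of_real c * ((of_real a)^2+(of_real c)^2) * \<alpha> * \<beta>)"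
    unfolding det_def bq_mult.simps cBQ by algebra
  then show ?thesis using nz[OF h] entI by (metis neg_equal_0_iff_equal)
qed

lemma q2b: "a \<noteq> 0 \<Longrightarrow> c \<noteq> 0 \<Longrightarrow> \<alpha> \<noteq> 0 \<Longrightarrow> \<beta> \<noteq> 0 \<Longrightarrow>
  entangled (bq_mult (bq_mult (BQ 0 (of_real a) 0 (of_real c)) (BQ 0 0 \<alpha> \<beta>)) (BQ 0 (of_real a) 0 (of_real c)))"
proof -
  assume h: "a \<noteq> 0" "c \<noteq> 0" "\<alpha> \<noteq> 0" "\<beta> \<noteq> 0"
  have "det (bq_mult (bq_mult (BQ 0 (of_real a) 0 (of_real c)) (BQ 0 0 \<alpha> \<beta>)) (BQ 0 (of_real a) 0 (of_real c))) =  (2 * (of_real a) * of_real c * ((of_real a)^2+(of_real c)^2) * \<alpha> * \<beta>)"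
    unfolding det_def bq_mult.simps cBQ by algebra
  then show ?thesis using nz[OF h] entI by (metis neg_equal_0_iff_equal)
qed

lemma q3a: "a \<noteq> 0 \<Longrightarrow> c \<noteq> 0 \<Longrightarrow> \<alpha> \<noteq> 0 \<Longrightarrow> \<beta> \<noteq> 0 \<Longrightarrow>
  entangled (bq_mult (bq_mult (BQ (of_real a) (of_real c) 0 0) (BQ \<alpha> 0 \<beta> 0)) (BQ (of_real a) (of_real c) 0 0))"
proof -
  assume h: "a \<noteq> 0" "c \<noteq> 0" "\<alpha> \<noteq> 0" "\<beta> \<noteq> 0"
  have "det (bq_mult (bq_mult (BQ (of_real a) (of_real c) 0 0) (BQ \<alpha> 0 \<beta> 0)) (BQ (of_real a) (of_real c) 0 0)) = - (2 * (of_real a) * of_real c * ((of_real a)^2+(of_real c)^2) * \<alpha> * \<beta>)"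
    unfolding det_def bq_mult.simps cBQ by algebra
  then show ?thesis using nz[OF h] entI by (metis neg_equal_0_iff_equal)
qed

lemma q3b: "a \<noteq> 0 \<Longrightarrow> c \<noteq> 0 \<Longrightarrow> \<alpha> \<noteq> 0 \<Longrightarrow> \<beta> \<noteq> 0 \<Longrightarrow>
  entangled (bq_mult (bq_mult (BQ 0 0 (of_real a) (of_real c)) (BQ \<alpha> 0 \<beta> 0)) (BQ 0 0 (of_real a) (of_real c)))"
proof -
  assume h: "a \<noteq> 0" "c \<noteq> 0" "\<alpha> \<noteq> 0" "\<beta> \<noteq> 0"
  have "det (bq_mult (bq_mult (BQ 0 0 (of_real a) (of_real c)) (BQ \<alpha> 0 \<beta> 0)) (BQ 0 0 (of_real a) (of_real c))) =  (2 * (of_real a) * of_real c * ((of_real a)^2+(of_real c)^2) * \<alpha> * \<beta>)"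
    unfolding det_def bq_mult.simps cBQ by algebra
  then show ?thesis using nz[OF h] entI by (metis neg_equal_0_iff_equal)
qed

lemma q4a: "a \<noteq> 0 \<Longrightarrow> c \<noteq> 0 \<Longrightarrow> \<alpha> \<noteq> 0 \<Longrightarrow> \<beta> \<noteq> 0 \<Longrightarrow>
  entangled (bq_mult (bq_mult (BQ (of_real a) (of_real c) 0 0) (BQ 0 \<alpha> 0 \<beta>)) (BQ (of_real a) (of_real c) 0 0))"
proof -
  assume h: "a \<noteq> 0" "c \<noteq> 0" "\<alpha> \<noteq> 0" "\<beta> \<noteq> 0"
  have "det (bq_mult (bq_mult (BQ (of_real a) (of_real c) 0 0) (BQ 0 \<alpha> 0 \<beta>)) (BQ (of_real a) (of_real c) 0 0)) = - (2 * (of_real a) * of_real c * ((of_real a)^2+(of_real c)^2) * \<alpha> * \<beta>)"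
    unfolding det_def bq_mult.simps cBQ by algebra
  then show ?thesis using nz[OF h] entI by (metis neg_equal_0_iff_equal)
qed

lemma q4b: "a \<noteq> 0 \<Longrightarrow> c \<noteq> 0 \<Longrightarrow> \<alpha> \<noteq> 0 \<Longrightarrow> \<beta> \<noteq> 0 \<Longrightarrow>
  entangled (bq_mult (bq_mult (BQ 0 0 (of_real a) (of_real c)) (BQ 0 \<alpha> 0 \<beta>)) (BQ 0 0 (of_real a) (of_real c)))"
proof -
  assume h: "a \<noteq> 0" "c \<noteq> 0" "\<alpha> \<noteq> 0" "\<beta> \<noteq> 0"
  have "det (bq_mult (bq_mult (BQ 0 0 (of_real a) (of_real c)) (BQ 0 \<alpha> 0 \<beta>)) (BQ 0 0 (of_real a) (of_real c))) =  (2 * (of_real a) * of_real c * ((of_real a)^2+(of_real c)^2) * \<alpha> * \<beta>)"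
    unfolding det_def bq_mult.simps cBQ by algebra
  then show ?thesis using nz[OF h] entI by (metis neg_equal_0_iff_equal)
qed


lemma card_le1: "S \<subseteq> {k::nat} \<Longrightarrow> card S \<le> 1"
  using card_mono[of "{k}" S] by simp

theorem mainTheorem1:
  fixes \<alpha> \<beta> :: complex and a1 a2 a3 a4 :: real and q p :: bq
  assumes "\<alpha> \<noteq> 0" and "\<beta> \<noteq> 0" and "(cmod \<alpha>)\<^sup>2 + (cmod \<beta>)\<^sup>2 = 1"
    and "q \<in> {BQ \<alpha> \<beta> 0 0, BQ 0 0 \<alpha> \<beta>, BQ \<alpha> 0 \<beta> 0, BQ 0 \<alpha> 0 \<beta>}"
    and "p = BQ (complex_of_real a1) (complex_of_real a2) (complex_of_real a3) (complex_of_real a4)"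
    and "a1\<^sup>2 + a2\<^sup>2 + a3\<^sup>2 + a4\<^sup>2 = 1"
    and R1: "\<not> entangled p"
    and R2: "card {m \<in> {1..4::nat}. coord p m \<noteq> 0} \<ge> 2"
    and R3: "\<exists>!m. m \<in> {1..4::nat} \<and> coord p m \<noteq> 0 \<and> coord q m \<noteq> 0"
  shows "entangled (bq_mult (bq_mult p q) p)"
proof -
  note pdef = assms(5)
  have e: "a1 * a4 = a2 * a3"
  proof -
    have "coord p 1 * coord p 4 - coord p 2 * coord p 3 = 0"
      using R1 unfolding entangled_def concurrence_def by simp
    then have "complex_of_real (a1 * a4 - a2 * a3) = 0" unfolding pdef cBQ by simp
    then show ?thesis by (simp only: of_real_eq_0_iff)
  qed
  have cp: "coord p 1 = of_real a1" "coord p 2 = of_real a2" "coord p 3 = of_real a3" "coord p 4 = of_real a4"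
    unfolding pdef cBQ by simp_all
  obtain m0 where m0: "\<And>y. y \<in> {1..4::nat} \<and> coord p y \<noteq> 0 \<and> coord q y \<noteq> 0 \<Longrightarrow> y = m0"
    using R3 by (auto simp only: Ex1_def)
  have U: "\<And>i j. i \<in> {1..4} \<Longrightarrow> j \<in> {1..4} \<Longrightarrow> coord p i \<noteq> 0 \<Longrightarrow> coord q i \<noteq> 0 \<Longrightarrow>
      coord p j \<noteq> 0 \<Longrightarrow> coord q j \<noteq> 0 \<Longrightarrow> i = j"
  proof -
    fix i j :: nat
    assume h: "i \<in> {1..4}" "j \<in> {1..4}" "coord p i \<noteq> 0" "coord q i \<noteq> 0" "coord p j \<noteq> 0" "coord q j \<noteq> 0"
    have "i = m0" using m0[of i] h(1,3,4) by blast
    moreover have "j = m0" using m0[of j] h(2,5,6) by blast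
    ultimately show "i = j" by simp
  qed
  obtain m where m: "m \<in> {1..4::nat}" "coord p m \<noteq> 0" "coord q m \<noteq> 0" using R3 by (auto simp only: Ex1_def)
  have only: "\<And>i j. {m \<in> {1..4::nat}. coord p m \<noteq> 0} \<subseteq> {i, j} \<Longrightarrow> coord p i \<noteq> 0 \<and> coord p j \<noteq> 0"
  proof -
    fix i j
    assume sub: "{m \<in> {1..4::nat}. coord p m \<noteq> 0} \<subseteq> {i, j}"
    have c1: "card {m \<in> {1..4::nat}. coord p m \<noteq> 0} \<le> 1" if "coord p k = 0" "l \<in> {i, j}" "k \<in> {i, j}" "{i, j} = {k, l}" for k l
    proof -
      have "{m \<in> {1..4::nat}. coord p m \<noteq> 0} \<subseteq> {l}"
      proof
        fix x assume x: "x \<in> {m \<in> {1..4::nat}. coord p m \<noteq> 0}"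
        then have "x \<in> {k, l}" using sub that(4) by blast
        moreover have "coord p x \<noteq> 0" using x by simp
        ultimately show "x \<in> {l}" using that(1) by auto
      qed
      then show ?thesis by (rule card_le1)
    qed
    show "coord p i \<noteq> 0 \<and> coord p j \<noteq> 0"
    proof (rule ccontr)
      assume "\<not> (coord p i \<noteq> 0 \<and> coord p j \<noteq> 0)"
      then have "coord p i = 0 \<or> coord p j = 0" by simp
      then have "card {m \<in> {1..4::nat}. coord p m \<noteq> 0} \<le> 1"
      proof
        assume "coord p i = 0" then show ?thesis by (rule c1[of i j]) simp_all
      next
        assume "coord p j = 0" then show ?thesis by (rule c1[of j i]) (simp_all add: insert_commute)
      qed
      then show False using R2 by linarith
    qed
  qed
  have i1: "(1::nat) \<in> {1..4}" and i2: "(2::nat) \<in> {1..4}" and i3: "(3::nat) \<in> {1..4}" and i4: "(4::nat) \<in> {1..4}"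
    by auto
  have m4: "m = 1 \<or> m = 2 \<or> m = 3 \<or> m = 4" using m(1) by auto
  from assms(4) consider "q = BQ \<alpha> \<beta> 0 0" | "q = BQ 0 0 \<alpha> \<beta>" | "q = BQ \<alpha> 0 \<beta> 0" | "q = BQ 0 \<alpha> 0 \<beta>"
    by blast
  then show ?thesis
  proof cases
    case 1
    have cq: "coord q 1 \<noteq> 0" "coord q 2 \<noteq> 0" "coord q 3 = 0" "coord q 4 = 0" using 1 assms(1,2) by simp_all
    from m4 m(3) cq have "m = 1 \<or> m = 2" by auto
    then show ?thesis
    proof
      assume "m = 1"
      then have "coord p m \<noteq> 0" using m by simp
      then have nzA: "a1 \<noteq> 0" using \<open>m = 1\<close> cp by simp
      have "coord p 2 = 0"
      proof (rule ccontr)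
        assume "coord p 2 \<noteq> 0"
        then have "m = 2" by (rule U[OF m(1) i2 m(2,3) _ cq(2)])
        then show False using \<open>m = 1\<close> by simp
      qed
      then have "a2 = 0" using cp by simp
      with e nzA have "a4 = 0" by simp
      have "{m \<in> {1..4::nat}. coord p m \<noteq> 0} \<subseteq> {1, 3}" unfolding four using cp \<open>a2 = 0\<close> \<open>a4 = 0\<close> by auto
      note only[OF this]
      have pd: "p = BQ (complex_of_real a1) 0 (complex_of_real a3) 0" using pdef \<open>a2 = 0\<close> \<open>a4 = 0\<close> by simp
      have nzs: "a1 \<noteq> 0" "a3 \<noteq> 0" using cp \<open>coord p 1 \<noteq> 0 \<and> coord p 3 \<noteq> 0\<close> by simp_all
      show ?thesis using q1a[OF nzs assms(1,2)] by (simp only: 1 pd)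
    next
      assume "m = 2"
      then have "coord p m \<noteq> 0" using m by simp
      then have nzA: "a2 \<noteq> 0" using \<open>m = 2\<close> cp by simp
      have "coord p 1 = 0"
      proof (rule ccontr)
        assume "coord p 1 \<noteq> 0"
        then have "m = 1" by (rule U[OF m(1) i1 m(2,3) _ cq(1)])
        then show False using \<open>m = 2\<close> by simp
      qed
      then have "a1 = 0" using cp by simp
      with e nzA have "a3 = 0" by simp
      have "{m \<in> {1..4::nat}. coord p m \<noteq> 0} \<subseteq> {2, 4}" unfolding four using cp \<open>a1 = 0\<close> \<open>a3 = 0\<close> by auto
      note only[OF this]
      have pd: "p = BQ 0 (complex_of_real a2) 0 (complex_of_real a4)" using pdef \<open>a1 = 0\<close> \<open>a3 = 0\<close> by simp
      have nzs: "a2 \<noteq> 0" "a4 \<noteq> 0" using cp \<open>coord p 2 \<noteq> 0 \<and> coord p 4 \<noteq> 0\<close> by simp_all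
      show ?thesis using q1b[OF nzs assms(1,2)] by (simp only: 1 pd)
    qed
  next
    case 2
    have cq: "coord q 1 = 0" "coord q 2 = 0" "coord q 3 \<noteq> 0" "coord q 4 \<noteq> 0" using 2 assms(1,2) by simp_all
    from m4 m(3) cq have "m = 3 \<or> m = 4" by auto
    then show ?thesis
    proof
      assume "m = 3"
      then have "coord p m \<noteq> 0" using m by simp
      then have nzA: "a3 \<noteq> 0" using \<open>m = 3\<close> cp by simp
      have "coord p 4 = 0"
      proof (rule ccontr)
        assume "coord p 4 \<noteq> 0"
        then have "m = 4" by (rule U[OF m(1) i4 m(2,3) _ cq(4)])
        then show False using \<open>m = 3\<close> by simp
      qed
      then have "a4 = 0" using cp by simp
      with e nzA have "a2 = 0" by simp
      have "{m \<in> {1..4::nat}. coord p m \<noteq> 0} \<subseteq> {1, 3}" unfolding four using cp \<open>a2 = 0\<close> \<open>a4 = 0\<close> by auto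
      note only[OF this]
      have pd: "p = BQ (complex_of_real a1) 0 (complex_of_real a3) 0" using pdef \<open>a2 = 0\<close> \<open>a4 = 0\<close> by simp
      have nzs: "a1 \<noteq> 0" "a3 \<noteq> 0" using cp \<open>coord p 1 \<noteq> 0 \<and> coord p 3 \<noteq> 0\<close> by simp_all
      show ?thesis using q2a[OF nzs assms(1,2)] by (simp only: 2 pd)
    next
      assume "m = 4"
      then have "coord p m \<noteq> 0" using m by simp
      then have nzA: "a4 \<noteq> 0" using \<open>m = 4\<close> cp by simp
      have "coord p 3 = 0"
      proof (rule ccontr)
        assume "coord p 3 \<noteq> 0"
        then have "m = 3" by (rule U[OF m(1) i3 m(2,3) _ cq(3)])
        then show False using \<open>m = 4\<close> by simp
      qed
      then have "a3 = 0" using cp by simp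
      with e nzA have "a1 = 0" by simp
      have "{m \<in> {1..4::nat}. coord p m \<noteq> 0} \<subseteq> {2, 4}" unfolding four using cp \<open>a1 = 0\<close> \<open>a3 = 0\<close> by auto
      note only[OF this]
      have pd: "p = BQ 0 (complex_of_real a2) 0 (complex_of_real a4)" using pdef \<open>a1 = 0\<close> \<open>a3 = 0\<close> by simp
      have nzs: "a2 \<noteq> 0" "a4 \<noteq> 0" using cp \<open>coord p 2 \<noteq> 0 \<and> coord p 4 \<noteq> 0\<close> by simp_all
      show ?thesis using q2b[OF nzs assms(1,2)] by (simp only: 2 pd)
    qed
  next
    case 3
    have cq: "coord q 1 \<noteq> 0" "coord q 2 = 0" "coord q 3 \<noteq> 0" "coord q 4 = 0" using 3 assms(1,2) by simp_all
    from m4 m(3) cq have "m = 1 \<or> m = 3" by auto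
    then show ?thesis
    proof
      assume "m = 1"
      then have "coord p m \<noteq> 0" using m by simp
      then have nzA: "a1 \<noteq> 0" using \<open>m = 1\<close> cp by simp
      have "coord p 3 = 0"
      proof (rule ccontr)
        assume "coord p 3 \<noteq> 0"
        then have "m = 3" by (rule U[OF m(1) i3 m(2,3) _ cq(3)])
        then show False using \<open>m = 1\<close> by simp
      qed
      then have "a3 = 0" using cp by simp
      with e nzA have "a4 = 0" by simp
      have "{m \<in> {1..4::nat}. coord p m \<noteq> 0} \<subseteq> {1, 2}" unfolding four using cp \<open>a3 = 0\<close> \<open>a4 = 0\<close> by auto
      note only[OF this]
      have pd: "p = BQ (complex_of_real a1) (complex_of_real a2) 0 0" using pdef \<open>a3 = 0\<close> \<open>a4 = 0\<close> by simp
      have nzs: "a1 \<noteq> 0" "a2 \<noteq> 0" using cp \<open>coord p 1 \<noteq> 0 \<and> coord p 2 \<noteq> 0\<close> by simp_all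
      show ?thesis using q3a[OF nzs assms(1,2)] by (simp only: 3 pd)
    next
      assume "m = 3"
      then have "coord p m \<noteq> 0" using m by simp
      then have nzA: "a3 \<noteq> 0" using \<open>m = 3\<close> cp by simp
      have "coord p 1 = 0"
      proof (rule ccontr)
        assume "coord p 1 \<noteq> 0"
        then have "m = 1" by (rule U[OF m(1) i1 m(2,3) _ cq(1)])
        then show False using \<open>m = 3\<close> by simp
      qed
      then have "a1 = 0" using cp by simp
      with e nzA have "a2 = 0" by simp
      have "{m \<in> {1..4::nat}. coord p m \<noteq> 0} \<subseteq> {3, 4}" unfolding four using cp \<open>a1 = 0\<close> \<open>a2 = 0\<close> by auto
      note only[OF this]
      have pd: "p = BQ 0 0 (complex_of_real a3) (complex_of_real a4)" using pdef \<open>a1 = 0\<close> \<open>a2 = 0\<close> by simp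
      have nzs: "a3 \<noteq> 0" "a4 \<noteq> 0" using cp \<open>coord p 3 \<noteq> 0 \<and> coord p 4 \<noteq> 0\<close> by simp_all
      show ?thesis using q3b[OF nzs assms(1,2)] by (simp only: 3 pd)
    qed
  next
    case 4
    have cq: "coord q 1 = 0" "coord q 2 \<noteq> 0" "coord q 3 = 0" "coord q 4 \<noteq> 0" using 4 assms(1,2) by simp_all
    from m4 m(3) cq have "m = 2 \<or> m = 4" by auto
    then show ?thesis
    proof
      assume "m = 2"
      then have "coord p m \<noteq> 0" using m by simp
      then have nzA: "a2 \<noteq> 0" using \<open>m = 2\<close> cp by simp
      have "coord p 4 = 0"
      proof (rule ccontr)
        assume "coord p 4 \<noteq> 0"
        then have "m = 4" by (rule U[OF m(1) i4 m(2,3) _ cq(4)])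
        then show False using \<open>m = 2\<close> by simp
      qed
      then have "a4 = 0" using cp by simp
      with e nzA have "a3 = 0" by simp
      have "{m \<in> {1..4::nat}. coord p m \<noteq> 0} \<subseteq> {1, 2}" unfolding four using cp \<open>a3 = 0\<close> \<open>a4 = 0\<close> by auto
      note only[OF this]
      have pd: "p = BQ (complex_of_real a1) (complex_of_real a2) 0 0" using pdef \<open>a3 = 0\<close> \<open>a4 = 0\<close> by simp
      have nzs: "a1 \<noteq> 0" "a2 \<noteq> 0" using cp \<open>coord p 1 \<noteq> 0 \<and> coord p 2 \<noteq> 0\<close> by simp_all
      show ?thesis using q4a[OF nzs assms(1,2)] by (simp only: 4 pd)
    next
      assume "m = 4"
      then have "coord p m \<noteq> 0" using m by simp
      then have nzA: "a4 \<noteq> 0" using \<open>m = 4\<close> cp by simp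
      have "coord p 2 = 0"
      proof (rule ccontr)
        assume "coord p 2 \<noteq> 0"
        then have "m = 2" by (rule U[OF m(1) i2 m(2,3) _ cq(2)])
        then show False using \<open>m = 4\<close> by simp
      qed
      then have "a2 = 0" using cp by simp
      with e nzA have "a1 = 0" by simp
      have "{m \<in> {1..4::nat}. coord p m \<noteq> 0} \<subseteq> {3, 4}" unfolding four using cp \<open>a1 = 0\<close> \<open>a2 = 0\<close> by auto
      note only[OF this]
      have pd: "p = BQ 0 0 (complex_of_real a3) (complex_of_real a4)" using pdef \<open>a1 = 0\<close> \<open>a2 = 0\<close> by simp
      have nzs: "a3 \<noteq> 0" "a4 \<noteq> 0" using cp \<open>coord p 3 \<noteq> 0 \<and> coord p 4 \<noteq> 0\<close> by simp_all
      show ?thesis using q4b[OF nzs assms(1,2)] by (simp only: 4 pd)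
    qed
  qed
qed

end
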